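(* Let $\Delta\subset\mathbb{R}$ be a finite interval, let $N$ be the number of eigenvalues of $H_n$ in $\Delta$, and let $\beta>0$. Then $$\bigl((N-1)^+\bigr)^{1+\beta}\le(n|\Delta|)^\beta\int_\Delta\sum_{\ell=1}^n\|M_n(E,\ell)\|^{2+2\beta}\,dE.$$
   Context: $H_n$ is an $n\times n$ symmetric tridiagonal matrix with real diagonal entries $v_{1,n},\dots,v_{n,n}$ and all sub- and super-diagonal entries equal to $1$ (in the paper $v_{\ell,n}=\sigma\omega_\ell/\sqrt n$ with $\omega_\ell$ random). With $T(x)=\begin{pmatrix}x&-1\\1&0\end{pmatrix}$, $M_n(E,\ell)=T(E-v_{\ell,n})T(E-v_{\ell-1,n})\cdots T(E-v_{1,n})$. $\|\cdot\|$ denotes the Hilbert–Schmidt norm on $2\times2$ matrices, and $|\Delta|$ is the length of $\Delta$. *)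

theory Defs
  imports "HOL-Analysis.Analysis"
begin

definition jacobiH :: "nat \<Rightarrow> (nat \<Rightarrow> real) \<Rightarrow> nat \<Rightarrow> nat \<Rightarrow> real" where
  "jacobiH n v i j = (if i = j then v i else if i = j + 1 \<or> j = i + 1 then 1 else 0)"

definition is_eigenvalue_H :: "nat \<Rightarrow> (nat \<Rightarrow> real) \<Rightarrow> real \<Rightarrow> bool" where
  "is_eigenvalue_H n v E \<longleftrightarrow>
     (\<exists>u :: nat \<Rightarrow> real. (\<exists>i\<in>{1..n}. u i \<noteq> 0) \<and>
        (\<forall>i\<in>{1..n}. (\<Sum>j=1..n. jacobiH n v i j * u j) = E * u i))"

definition eig_count :: "nat \<Rightarrow> (nat \<Rightarrow> real) \<Rightarrow> real set \<Rightarrow> nat" where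
  "eig_count n v D = card {E \<in> D. is_eigenvalue_H n v E}"

definition transferT :: "real \<Rightarrow> real^2^2" where
  "transferT x = vector [vector [x, -1], vector [1, 0]]"

fun transferM :: "(nat \<Rightarrow> real) \<Rightarrow> real \<Rightarrow> nat \<Rightarrow> real^2^2" where
  "transferM v E 0 = mat 1"
| "transferM v E (Suc l) = transferT (E - v (Suc l)) ** transferM v E l"

end

theory Submission
  imports Defs
begin


fun sol :: "(nat\<Rightarrow>real) \<Rightarrow> real \<Rightarrow> real \<Rightarrow> real \<Rightarrow> nat \<Rightarrow> real" where
  "sol v s0 s1 E 0 = s0"
| "sol v s0 s1 E (Suc 0) = s1"
| "sol v s0 s1 E (Suc (Suc k)) = (E - v (Suc k)) * sol v s0 s1 E (Suc k) - sol v s0 s1 E k"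

fun dsol :: "(nat\<Rightarrow>real) \<Rightarrow> real \<Rightarrow> real \<Rightarrow> real \<Rightarrow> nat \<Rightarrow> real" where
  "dsol v s0 s1 E 0 = 0"
| "dsol v s0 s1 E (Suc 0) = 0"
| "dsol v s0 s1 E (Suc (Suc k)) = sol v s0 s1 E (Suc k) + (E - v (Suc k)) * dsol v s0 s1 E (Suc k) - dsol v s0 s1 E k"

lemma transferM_eq:
  "transferM v E l = vector [vector [sol v 0 1 E (Suc l), sol v 1 0 E (Suc l)],
                             vector [sol v 0 1 E l, sol v 1 0 E l]]"
proof (induction l)
  case 0
  show ?case by (simp add: vec_eq_iff forall_2 mat_def vector_2)
next
  case (Suc l)
  show ?case
    by (simp add: Suc vec_eq_iff forall_2 matrix_matrix_mult_def sum_2 transferT_def vector_2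
        algebra_simps)
qed

lemma norm_transferM_sq:
  "(norm (transferM v E l))\<^sup>2 = (sol v 0 1 E (Suc l))\<^sup>2 + (sol v 1 0 E (Suc l))\<^sup>2
      + (sol v 0 1 E l)\<^sup>2 + (sol v 1 0 E l)\<^sup>2"
  unfolding power2_norm_eq_inner
  by (simp add: transferM_eq inner_vec_def sum_2 power2_eq_square)

lemma sol_deriv: "((\<lambda>E. sol v s0 s1 E k) has_real_derivative dsol v s0 s1 E k) (at E)"
proof (induction k rule: less_induct)
  case (less k)
  show ?case
  proof (cases k)
    case 0 then show ?thesis by simp
  next
    case (Suc m)
    show ?thesis
    proof (cases m)
      case 0 then show ?thesis using Suc by simp
    next
      case (Suc j)
      have h1: "((\<lambda>E. E - v (Suc j)) has_real_derivative 1) (at E)"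
        by (rule derivative_eq_intros refl)+ simp
      have h2: "((\<lambda>E. sol v s0 s1 E (Suc j)) has_real_derivative dsol v s0 s1 E (Suc j)) (at E)"
        and h3: "((\<lambda>E. sol v s0 s1 E j) has_real_derivative dsol v s0 s1 E j) (at E)"
        using less \<open>k = Suc m\<close> Suc by auto
      have "((\<lambda>E. (E - v (Suc j)) * sol v s0 s1 E (Suc j) - sol v s0 s1 E j) has_real_derivative
          1 * sol v s0 s1 E (Suc j) + dsol v s0 s1 E (Suc j) * (E - v (Suc j)) - dsol v s0 s1 E j) (at E)"
        by (intro DERIV_diff DERIV_mult h1 h2 h3)
      then show ?thesis using \<open>k = Suc m\<close> Suc by (simp add: algebra_simps)
    qed
  qed
qed

lemma sol_det: "sol v 0 1 E (Suc k) * sol v 1 0 E k - sol v 1 0 E (Suc k) * sol v 0 1 E k = 1"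
  by (induction k) (auto simp: algebra_simps)

definition SA where "SA v E l = (\<Sum>j=1..l. sol v 0 1 E j * sol v 1 0 E j)"
definition SB where "SB v E l = (\<Sum>j=1..l. (sol v 0 1 E j)\<^sup>2)"
definition SC where "SC v E l = (\<Sum>j=1..l. (sol v 1 0 E j)\<^sup>2)"

lemma dsol_closed:
  "dsol v 0 1 E (Suc l) = sol v 0 1 E (Suc l) * SA v E l - sol v 1 0 E (Suc l) * SB v E l \<and>
   dsol v 0 1 E l = sol v 0 1 E l * SA v E l - sol v 1 0 E l * SB v E l \<and>
   dsol v 1 0 E (Suc l) = sol v 0 1 E (Suc l) * SC v E l - sol v 1 0 E (Suc l) * SA v E l \<and>
   dsol v 1 0 E l = sol v 0 1 E l * SC v E l - sol v 1 0 E l * SA v E l"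
proof (induction l)
  case 0
  then show ?case by (simp add: SA_def SB_def SC_def)
next
  case (Suc l)
  have d: "sol v 0 1 E (Suc (Suc l)) * sol v 1 0 E (Suc l) - sol v 1 0 E (Suc (Suc l)) * sol v 0 1 E (Suc l) = 1"
    by (rule sol_det)
  have sa: "SA v E (Suc l) = SA v E l + sol v 0 1 E (Suc l) * sol v 1 0 E (Suc l)"
    and sb: "SB v E (Suc l) = SB v E l + (sol v 0 1 E (Suc l))\<^sup>2"
    and sc: "SC v E (Suc l) = SC v E l + (sol v 1 0 E (Suc l))\<^sup>2"
    by (simp_all add: SA_def SB_def SC_def)
  show ?case
  proof (intro conjI)
    show "dsol v 0 1 E (Suc l) = sol v 0 1 E (Suc l) * SA v E (Suc l) - sol v 1 0 E (Suc l) * SB v E (Suc l)"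
      using Suc.IH by (simp add: sa sb power2_eq_square algebra_simps)
    show "dsol v 1 0 E (Suc l) = sol v 0 1 E (Suc l) * SC v E (Suc l) - sol v 1 0 E (Suc l) * SA v E (Suc l)"
      using Suc.IH by (simp add: sa sc power2_eq_square algebra_simps)
    have e1: "dsol v 0 1 E (Suc (Suc l)) = sol v 0 1 E (Suc l) + (E - v (Suc l)) * dsol v 0 1 E (Suc l) - dsol v 0 1 E l"
      by simp
    show "dsol v 0 1 E (Suc (Suc l)) = sol v 0 1 E (Suc (Suc l)) * SA v E (Suc l) - sol v 1 0 E (Suc (Suc l)) * SB v E (Suc l)"
      using e1 sa sb Suc.IH d sol_det[of v E l] by (simp add: power2_eq_square) algebra
    have e2: "dsol v 1 0 E (Suc (Suc l)) = sol v 1 0 E (Suc l) + (E - v (Suc l)) * dsol v 1 0 E (Suc l) - dsol v 1 0 E l"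
      by simp
    show "dsol v 1 0 E (Suc (Suc l)) = sol v 0 1 E (Suc (Suc l)) * SC v E (Suc l) - sol v 1 0 E (Suc (Suc l)) * SA v E (Suc l)"
      using e2 sa sc Suc.IH d sol_det[of v E l] by (simp add: power2_eq_square) algebra
  qed
qed



lemma arctan_two_gt_one: "1 < arctan (2::real)"
proof -
  have "cos (pi/3) < cos (1::real)"
    using pi_gt3 by (intro cos_monotone_0_pi) auto
  then have c: "1/2 < cos (1::real)" by (simp add: cos_60)
  have s: "sin (1::real) \<le> 1" by simp
  have "tan (1::real) < 2"
  proof -
    have cp: "cos (1::real) > 0" using c by linarith
    have "sin (1::real) < 2 * cos 1" using c s by linarith
    then show ?thesis unfolding tan_def using cp by (simp add: divide_less_eq)
  qed
  moreover have "arctan (tan 1) = (1::real)"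
    using pi_gt3 by (intro arctan_tan) auto
  ultimately show ?thesis
    by (metis arctan_less_iff)
qed

lemma arctan_aux:
  fixes A B A' B' :: real
  assumes "B \<noteq> 0"
  shows "inverse (1 + (A / B)\<^sup>2) * ((A' * B - A * B') / (B * B)) = - ((A * B' - A' * B) / (A\<^sup>2 + B\<^sup>2))"
proof -
  have s: "A\<^sup>2 + B\<^sup>2 \<noteq> 0" using assms by (simp add: sum_power2_eq_zero_iff)
  have "1 + (A / B)\<^sup>2 = (A\<^sup>2 + B\<^sup>2) / B\<^sup>2" using assms by (simp add: field_simps)
  then have "inverse (1 + (A / B)\<^sup>2) = B\<^sup>2 / (A\<^sup>2 + B\<^sup>2)" by simp
  moreover have "B\<^sup>2 / (A\<^sup>2 + B\<^sup>2) * ((A' * B - A * B') / (B * B)) = (A' * B - A * B') / (A\<^sup>2 + B\<^sup>2)"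
  proof -
    have "B\<^sup>2 / (A\<^sup>2 + B\<^sup>2) * ((A' * B - A * B') / (B * B))
        = (B\<^sup>2 * (A' * B - A * B')) / (B\<^sup>2 * (A\<^sup>2 + B\<^sup>2))"
      by (simp add: power2_eq_square mult.commute)
    also have "\<dots> = (A' * B - A * B') / (A\<^sup>2 + B\<^sup>2)"
      using assms by (subst mult_divide_mult_cancel_left) auto
    finally show ?thesis .
  qed
  moreover have "(A' * B - A * B') / (A\<^sup>2 + B\<^sup>2) = - ((A * B' - A' * B) / (A\<^sup>2 + B\<^sup>2))"
    by (metis minus_diff_eq minus_divide_left)
  ultimately show ?thesis by metis
qed

lemma gap:
  fixes a b a' b' g :: "real \<Rightarrow> real" and x y :: real
  assumes da: "\<And>t. (a has_real_derivative a' t) (at t)"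
    and db: "\<And>t. (b has_real_derivative b' t) (at t)"
    and W: "\<And>t. a t * b' t - a' t * b t > 0"
    and hg: "\<And>t. (a t * b' t - a' t * b t) / ((a t)\<^sup>2 + (b t)\<^sup>2) \<le> g t"
    and gc: "continuous_on UNIV g"
    and g0: "\<And>t. 0 \<le> g t"
    and xy: "x < y" and ax: "a x = 0" and ay: "a y = 0"
  shows "1 \<le> integral {x..y} g"
proof -
  have ca: "continuous_on A a" for A
    using da by (meson DERIV_isCont continuous_at_imp_continuous_on)
  have cb: "continuous_on A b" for A
    using db by (meson DERIV_isCont continuous_at_imp_continuous_on)
  have bx: "b x \<noteq> 0" using W[of x] ax by auto
  have by': "b y \<noteq> 0" using W[of y] ay by auto
  have ab0: "(a t)\<^sup>2 + (b t)\<^sup>2 > 0" for t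
  proof -
    have "\<not> (a t = 0 \<and> b t = 0)" using W[of t] by auto
    then show ?thesis by (simp add: sum_power2_gt_zero_iff)
  qed
  obtain z where xz: "x < z" and zy: "z < y" and bz: "b z = 0"
  proof (rule ccontr)
    assume "\<not> thesis"
    with that have nz: "b t \<noteq> 0" if "x \<le> t" "t \<le> y" for t
      using bx by' that by force
    have "(\<lambda>t. a t / b t) y < (\<lambda>t. a t / b t) x"
    proof (rule DERIV_neg_imp_decreasing[OF xy])
      fix t assume "x \<le> t" "t \<le> y"
      then have bt: "b t \<noteq> 0" by (rule nz)
      show "\<exists>D. ((\<lambda>t. a t / b t) has_real_derivative D) (at t) \<and> D < 0"
      proof (intro exI conjI)
        show "((\<lambda>t. a t / b t) has_real_derivative (a' t * b t - a t * b' t) / (b t * b t)) (at t)"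
          by (rule DERIV_divide[OF da db bt])
        have "(b t)\<^sup>2 > 0" using bt by simp
        then have "b t * b t > 0" by (simp add: power2_eq_square)
        then show "(a' t * b t - a t * b' t) / (b t * b t) < 0"
          using W[of t] by (simp add: divide_neg_pos)
      qed
    qed
    then show False using ax ay by simp
  qed
  define S where "S = {t \<in> {x..z}. b t = 0}"
  have Sne: "S \<noteq> {}" using bz xz unfolding S_def by auto
  have Sbdd: "bdd_below S" unfolding S_def by (auto intro: bdd_belowI[of _ x])
  have Scl: "closed S" unfolding S_def
    by (rule continuous_closed_preimage_constant[OF cb]) simp
  define c where "c = Inf S"
  have cS: "c \<in> S" unfolding c_def by (rule closed_contains_Inf[OF Sne Sbdd Scl])
  have cle: "c \<le> t" if "t \<in> S" for t
    unfolding c_def using that Sbdd by (rule cInf_lower)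
  have bc: "b c = 0" and xc: "x \<le> c" and "c \<le> z" using cS unfolding S_def by auto
  have xc': "x < c" using xc bc bx by (cases "x = c") auto
  have ac: "a c \<noteq> 0" using W[of c] bc by auto
  define \<psi> where "\<psi> t = \<bar>a t\<bar> - 2 * \<bar>b t\<bar>" for t
  have cpsi: "continuous_on {x..c} \<psi>" unfolding \<psi>_def
    by (intro continuous_intros ca cb)
  have "\<psi> x \<le> 0" "0 \<le> \<psi> c" using ax bc unfolding \<psi>_def by auto
  then obtain d where xd: "x \<le> d" and dc: "d \<le> c" and pd: "\<psi> d = 0"
    using IVT'[of \<psi> x 0 c] xc cpsi by blast
  have "\<psi> c > 0" using bc ac unfolding \<psi>_def by auto
  then have dc': "d < c" using dc pd by (cases "d = c") auto
  have "\<psi> x < 0" using ax bx unfolding \<psi>_def by auto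
  then have xd': "x < d" using xd pd by (cases "x = d") auto
  have bnz: "b t \<noteq> 0" if "t \<in> {x..d}" for t
  proof
    assume "b t = 0"
    then have "t \<in> S" using that dc' xc' \<open>c \<in> S\<close> unfolding S_def by auto
    then have "c \<le> t" by (rule cle)
    then show False using that dc' by auto
  qed
  define h where "h t = (a t * b' t - a' t * b t) / ((a t)\<^sup>2 + (b t)\<^sup>2)" for t
  define f where "f t = arctan (a t / b t)" for t
  have deriv: "(f has_vector_derivative (- h t)) (at t within {x..d})" if "t \<in> {x..d}" for t
  proof -
    have bt: "b t \<noteq> 0" using bnz that by blast
    have "(f has_real_derivative
        inverse (1 + (a t / b t)\<^sup>2) * ((a' t * b t - a t * b' t) / (b t * b t))) (at t)"
      unfolding f_def by (rule DERIV_chain2[OF DERIV_arctan DERIV_divide[OF da db bt]])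
    moreover have "inverse (1 + (a t / b t)\<^sup>2) * ((a' t * b t - a t * b' t) / (b t * b t)) = - h t"
      unfolding h_def by (rule arctan_aux[OF bt])
    ultimately have "(f has_real_derivative - h t) (at t)" by simp
    then show ?thesis
      by (simp add: has_real_derivative_iff_has_vector_derivative[symmetric] has_field_derivative_at_within)
  qed
  have "((\<lambda>t. - h t) has_integral f d - f x) {x..d}"
    using fundamental_theorem_of_calculus[OF xd deriv] by simp
  then have hi: "(h has_integral arctan (- (a d / b d))) {x..d}"
    using has_integral_neg[of "\<lambda>t. - h t"] ax unfolding f_def by (simp add: arctan_minus)
  have h0: "0 \<le> h t" for t unfolding h_def using W[of t] ab0[of t] by simp
  have "0 \<le> arctan (- (a d / b d))"
    using has_integral_nonneg[OF hi] h0 by blast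
  then have neg: "a d / b d \<le> 0" by (simp add: arctan_le_zero_iff)
  have bd: "b d \<noteq> 0" using bnz xd' by auto
  have "\<bar>a d\<bar> = 2 * \<bar>b d\<bar>" using pd unfolding \<psi>_def by simp
  then have "\<bar>a d / b d\<bar> = 2" using bd by (simp add: abs_divide)
  then have "a d / b d = -2" using neg by linarith
  then have hi2: "(h has_integral arctan 2) {x..d}" using hi by simp
  have gint: "g integrable_on {x..d}" "g integrable_on {x..y}"
    by (auto intro!: integrable_continuous_interval continuous_on_subset[OF gc])
  have "1 \<le> arctan (2::real)" using arctan_two_gt_one by simp
  also have "arctan 2 = integral {x..d} h" using hi2 by (simp add: integral_unique)
  also have "\<dots> \<le> integral {x..d} g"
    using hi2 gint(1) hg unfolding h_def by (intro integral_le) (auto simp: has_integral_integrable)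
  also have "\<dots> \<le> integral {x..y} g"
    using gint xd' dc' \<open>c \<le> z\<close> zy g0 by (intro integral_subset_le) auto
  finally show ?thesis .
qed



lemma W_identity:
  fixes v :: "nat \<Rightarrow> real" and E :: real and n :: nat and a b :: real
  defines "a \<equiv> sol v 0 1 E (Suc n)" and "b \<equiv> sol v 1 0 E (Suc n)"
  shows "a * dsol v 1 0 E (Suc n) - dsol v 0 1 E (Suc n) * b
     = (\<Sum>l=1..n. (a * sol v 1 0 E l - b * sol v 0 1 E l)\<^sup>2)"
proof -
  have d1: "dsol v 0 1 E (Suc n) = a * SA v E n - b * SB v E n"
    and d2: "dsol v 1 0 E (Suc n) = a * SC v E n - b * SA v E n"
    using dsol_closed[of v E n] unfolding a_def b_def by auto
  have "(\<Sum>l=1..n. (a * sol v 1 0 E l - b * sol v 0 1 E l)\<^sup>2)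
      = (\<Sum>l=1..n. a\<^sup>2 * (sol v 1 0 E l)\<^sup>2 - 2 * a * b * (sol v 0 1 E l * sol v 1 0 E l)
                 + b\<^sup>2 * (sol v 0 1 E l)\<^sup>2)"
    by (intro sum.cong) (auto simp: power2_eq_square algebra_simps)
  also have "\<dots> = a\<^sup>2 * SC v E n - 2 * a * b * SA v E n + b\<^sup>2 * SB v E n"
    by (simp add: SA_def SB_def SC_def sum.distrib sum_subtractf sum_distrib_left)
  finally show ?thesis unfolding d1 d2 by (simp add: power2_eq_square algebra_simps)
qed

lemma W_ge1:
  assumes "n \<ge> 1"
  shows "1 \<le> (\<Sum>l=1..n. (sol v 0 1 E (Suc n) * sol v 1 0 E l - sol v 1 0 E (Suc n) * sol v 0 1 E l)\<^sup>2)"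
proof -
  have "(sol v 0 1 E (Suc n) * sol v 1 0 E n - sol v 1 0 E (Suc n) * sol v 0 1 E n)\<^sup>2 = 1"
    using sol_det[of v E n] by simp
  moreover have "(sol v 0 1 E (Suc n) * sol v 1 0 E n - sol v 1 0 E (Suc n) * sol v 0 1 E n)\<^sup>2
      \<le> (\<Sum>l=1..n. (sol v 0 1 E (Suc n) * sol v 1 0 E l - sol v 1 0 E (Suc n) * sol v 0 1 E l)\<^sup>2)"
    using assms by (intro member_le_sum) auto
  ultimately show ?thesis by simp
qed

lemma W_le:
  fixes v :: "nat \<Rightarrow> real" and E :: real and n :: nat and a b :: real
  defines "a \<equiv> sol v 0 1 E (Suc n)" and "b \<equiv> sol v 1 0 E (Suc n)"
  shows "(\<Sum>l=1..n. (a * sol v 1 0 E l - b * sol v 0 1 E l)\<^sup>2)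
     \<le> (a\<^sup>2 + b\<^sup>2) * (\<Sum>l=1..n. (norm (transferM v E l))\<^sup>2)"
  unfolding sum_distrib_left
proof (rule sum_mono)
  fix l
  have "(a * sol v 1 0 E l - b * sol v 0 1 E l)\<^sup>2
      = (a\<^sup>2 + b\<^sup>2) * ((sol v 0 1 E l)\<^sup>2 + (sol v 1 0 E l)\<^sup>2) - (a * sol v 0 1 E l + b * sol v 1 0 E l)\<^sup>2"
    by (simp add: power2_eq_square algebra_simps)
  also have "\<dots> \<le> (a\<^sup>2 + b\<^sup>2) * ((sol v 0 1 E l)\<^sup>2 + (sol v 1 0 E l)\<^sup>2)" by simp
  also have "\<dots> \<le> (a\<^sup>2 + b\<^sup>2) * (norm (transferM v E l))\<^sup>2"
    unfolding norm_transferM_sq by (intro mult_left_mono) auto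
  finally show "(a * sol v 1 0 E l - b * sol v 0 1 E l)\<^sup>2 \<le> (a\<^sup>2 + b\<^sup>2) * (norm (transferM v E l))\<^sup>2" .
qed

lemma sol_cont: "continuous_on A (\<lambda>E. sol v s0 s1 E k)"
  using sol_deriv by (meson DERIV_isCont continuous_at_imp_continuous_on)

lemma normsq_cont: "continuous_on A (\<lambda>E. (norm (transferM v E l))\<^sup>2)"
  unfolding norm_transferM_sq by (intro continuous_intros sol_cont)

lemma normsq_ge: "2 \<le> (norm (transferM v E l))\<^sup>2"
proof -
  have "2 * (sol v 0 1 E (Suc l) * sol v 1 0 E l - sol v 1 0 E (Suc l) * sol v 0 1 E l) \<le>
     (sol v 0 1 E (Suc l))\<^sup>2 + (sol v 1 0 E (Suc l))\<^sup>2 + (sol v 0 1 E l)\<^sup>2 + (sol v 1 0 E l)\<^sup>2"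
    using sum_squares_ge_zero[of "sol v 0 1 E (Suc l) - sol v 1 0 E l" "sol v 1 0 E (Suc l) + sol v 0 1 E l"]
    by (simp add: power2_eq_square algebra_simps)
  then show ?thesis unfolding norm_transferM_sq using sol_det[of v E l] by simp
qed

lemma eigen_zero:
  assumes "is_eigenvalue_H n v E"
  shows "sol v 0 1 E (Suc n) = 0"
proof -
  obtain u where nz: "\<exists>i\<in>{1..n}. u i \<noteq> 0"
    and eq: "\<And>i. i \<in> {1..n} \<Longrightarrow> (\<Sum>j=1..n. jacobiH n v i j * u j) = E * u i"
    using assms unfolding is_eigenvalue_H_def by blast
  define w where "w j = (if 1 \<le> j \<and> j \<le> n then u j else 0)" for j
  have rec: "w (Suc i) = (E - v i) * w i - w (i - 1)" if i: "i \<in> {1..n}" for i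
  proof -
    have pt: "jacobiH n v i j * u j = (if j = i then v i * u j else 0) + (if j = Suc i then u j else 0)
           + (if j = i - 1 then u j else 0)" for j
      using i by (cases "j = i"; cases "j = Suc i"; cases "j = i - 1") (auto simp: jacobiH_def)
    have "(\<Sum>j=1..n. jacobiH n v i j * u j) =
        (\<Sum>j=1..n. (if j = i then v i * u j else 0)) + (\<Sum>j=1..n. (if j = Suc i then u j else 0))
           + (\<Sum>j=1..n. (if j = i - 1 then u j else 0))"
      unfolding pt sum.distrib by simp
    also have "\<dots> = v i * u i + w (Suc i) + w (i - 1)"
      using i unfolding sum.delta' w_def by simp
    finally show ?thesis using eq[OF i] i by (simp add: w_def algebra_simps)
  qed
  have main: "k \<le> Suc n \<Longrightarrow> w k = w 1 * sol v 0 1 E k" for k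
  proof (induction k rule: less_induct)
    case (less k)
    show ?case
    proof (cases k)
      case 0 then show ?thesis by (simp add: w_def)
    next
      case (Suc m)
      show ?thesis
      proof (cases m)
        case 0 then show ?thesis using Suc by simp
      next
        case (Suc j)
        have "w (Suc (Suc j)) = (E - v (Suc j)) * w (Suc j) - w j"
          using rec[of "Suc j"] less.prems \<open>k = Suc m\<close> Suc by auto
        moreover have "w (Suc j) = w 1 * sol v 0 1 E (Suc j)" "w j = w 1 * sol v 0 1 E j"
          using less.IH[of "Suc j"] less.IH[of j] less.prems \<open>k = Suc m\<close> Suc by simp_all
        ultimately show ?thesis using \<open>k = Suc m\<close> Suc by (simp add: algebra_simps)
      qed
    qed
  qed
  have "w (Suc n) = 0" by (simp add: w_def)
  then have "w 1 * sol v 0 1 E (Suc n) = 0" using main[of "Suc n"] by simp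
  moreover have "w 1 \<noteq> 0"
  proof
    assume "w 1 = 0"
    have zk: "w k = 0" if "k \<le> Suc n" for k using main[OF that] \<open>w 1 = 0\<close> by simp
    then show False
    proof -
      obtain i where i: "i \<in> {1..n}" "u i \<noteq> 0" using nz by blast
      have "w i = 0" using zk[of i] i by simp
      then show False using i by (simp add: w_def)
    qed
  qed
  ultimately show ?thesis by simp
qed



lemma powr_deriv: "x > 0 \<Longrightarrow> ((\<lambda>x::real. x powr p) has_real_derivative p * x powr (p - 1)) (at x)"
  by (rule derivative_eq_intros refl | simp)+

lemma tangent_powr:
  fixes x c p :: real
  assumes x: "x > 0" and c: "c > 0" and p: "p \<ge> 1"
  shows "c powr p + p * c powr (p - 1) * (x - c) \<le> x powr p"
proof -
  define \<phi> where "\<phi> t = t powr p - p * c powr (p - 1) * t" for t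
  have d: "(\<phi> has_real_derivative p * t powr (p - 1) - p * c powr (p - 1)) (at t)" if "t > 0" for t
    unfolding \<phi>_def
    by (rule derivative_eq_intros powr_deriv[OF that] refl | simp)+
  have "\<phi> c \<le> \<phi> x"
  proof (cases "c \<le> x")
    case True
    show ?thesis
    proof (rule DERIV_nonneg_imp_nondecreasing[OF True])
      fix t assume "c \<le> t" "t \<le> x"
      then have t: "t > 0" using c by simp
      have "c powr (p - 1) \<le> t powr (p - 1)" using \<open>c \<le> t\<close> c p by (intro powr_mono2) auto
      then show "\<exists>y. (\<phi> has_real_derivative y) (at t) \<and> 0 \<le> y"
        using d[OF t] p by (intro exI[of _ "p * t powr (p - 1) - p * c powr (p - 1)"]) (auto simp: mult_left_mono)
    qed
  next
    case False
    then have xc: "x \<le> c" by simp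
    show ?thesis
    proof (rule DERIV_nonpos_imp_nonincreasing[OF xc])
      fix t assume "x \<le> t" "t \<le> c"
      then have t: "t > 0" using x by simp
      have "t powr (p - 1) \<le> c powr (p - 1)" using \<open>t \<le> c\<close> t p by (intro powr_mono2) auto
      then show "\<exists>y. (\<phi> has_real_derivative y) (at t) \<and> y \<le> 0"
        using d[OF t] p by (intro exI[of _ "p * t powr (p - 1) - p * c powr (p - 1)"]) (auto simp: mult_left_mono)
    qed
  qed
  moreover have cc: "c * c powr (p - 1) = c powr p"
    using c by (simp add: powr_mult_base)
  then have e: "p * c powr (p - 1) * c = p * c powr p" by (metis mult.assoc mult.commute)
  have e2: "p * c powr (p - 1) * (x - c) = p * c powr (p - 1) * x - p * c powr p"
    by (simp add: right_diff_distrib e)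
  ultimately show ?thesis unfolding \<phi>_def e2 using e by linarith
qed

lemma count_zeros:
  fixes g :: "real \<Rightarrow> real" and Z S :: "real set"
  assumes gc: "continuous_on UNIV g" and g0: "\<And>t. 0 \<le> g t"
    and gap: "\<And>x y. x < y \<Longrightarrow> x \<in> Z \<Longrightarrow> y \<in> Z \<Longrightarrow> 1 \<le> integral {x..y} g"
    and fin: "finite S"
  shows "S \<subseteq> Z \<Longrightarrow> S \<noteq> {} \<Longrightarrow> real (card S) - 1 \<le> integral {Min S..Max S} g"
  using fin
proof (induction S rule: finite_linorder_max_induct)
  case empty then show ?case by simp
next
  case (insert b A)
  have gi: "g integrable_on {x..y}" for x y
    by (intro integrable_continuous_interval continuous_on_subset[OF gc]) auto
  show ?case
  proof (cases "A = {}")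
    case True
    then show ?thesis using g0 by (simp add: integral_nonneg)
  next
    case False
    have bA: "b \<notin> A" using insert.hyps(2) by auto
    have mn: "Min (insert b A) = Min A" using False insert.hyps by (simp add: min_def) (meson Min_in less_le_not_le)
    have mx: "Max (insert b A) = b" using False insert.hyps by (simp add: max_def) (meson Max_in less_le_not_le)
    have ih: "real (card A) - 1 \<le> integral {Min A..Max A} g"
      using insert False by auto
    have MA: "Max A < b" using False insert.hyps Max_in by blast
    have mM: "Min A \<le> Max A" using False insert.hyps(1) by simp
    have g1: "1 \<le> integral {Max A..b} g"
      using gap[OF MA] insert.prems False insert.hyps(1) Max_in by blast
    have "integral {Min A..Max A} g + integral {Max A..b} g = integral {Min A..b} g"
      using mM MA gi[of "Min A" b] by (intro Henstock_Kurzweil_Integration.integral_combine) auto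
    then show ?thesis
      using ih g1 bA insert.hyps(1) mn mx by simp
  qed
qed

lemma integrable_bdd_interval:
  fixes f :: "real \<Rightarrow> real"
  assumes fc: "continuous_on UNIV f" and iv: "is_interval \<Delta>" and bd: "bounded \<Delta>"
  shows "f integrable_on \<Delta>"
proof -
  obtain B where B: "\<And>x. x \<in> \<Delta> \<Longrightarrow> \<bar>x\<bar> \<le> B" using bd unfolding bounded_real by blast
  have ci: "f integrable_on {a..b}" for a b
    by (intro integrable_continuous_interval continuous_on_subset[OF fc]) auto
  have neg: "negligible X" if "X \<subseteq> {a, b}" for X :: "real set" and a b :: real
  proof -
    have "negligible {a, b}" by (intro negligible_finite) auto
    then show ?thesis using negligible_subset that by blast
  qed
  obtain a b where cs: "\<Delta> = {} \<or> \<Delta> = UNIV \<or> \<Delta> = {..<b} \<or> \<Delta> = {..b} \<or> \<Delta> = {a<..} \<or> \<Delta> = {a..} \<or>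
    \<Delta> = {a<..<b} \<or> \<Delta> = {a<..b} \<or> \<Delta> = {a..<b} \<or> \<Delta> = {a..b}"
    using is_real_interval[OF iv] by blast
  have nb1: False if "\<Delta> = {..<c} \<or> \<Delta> = {..c}" for c
  proof -
    have "- \<bar>B\<bar> - \<bar>c\<bar> - 1 \<in> \<Delta>" using that by auto
    from B[OF this] show False by linarith
  qed
  have nb2: False if "\<Delta> = {c<..} \<or> \<Delta> = {c..}" for c
  proof -
    have "\<bar>B\<bar> + \<bar>c\<bar> + 1 \<in> \<Delta>" using that by auto
    from B[OF this] show False by linarith
  qed
  have nb3: False if "\<Delta> = UNIV"
  proof -
    have "\<bar>B\<bar> + 1 \<in> \<Delta>" using that by auto
    from B[OF this] show False by linarith
  qed
  show ?thesis
    using cs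
  proof (elim disjE)
    assume "\<Delta> = {a<..<b}" then show ?thesis using ci integrable_on_open_interval_real by blast
  next
    assume "\<Delta> = {a<..b}"
    moreover have "f integrable_on {a..b} \<longleftrightarrow> f integrable_on {a<..b}"
      by (rule integrable_spike_set_eq, rule neg[of _ a b]) auto
    ultimately show ?thesis using ci by blast
  next
    assume "\<Delta> = {a..<b}"
    moreover have "f integrable_on {a..b} \<longleftrightarrow> f integrable_on {a..<b}"
      by (rule integrable_spike_set_eq, rule neg[of _ a b]) auto
    ultimately show ?thesis using ci by blast
  qed (use ci nb1 nb2 nb3 in auto)
qed



lemma normpowr_eq: "norm (transferM v E l) powr (2 + 2 * \<beta>) = ((norm (transferM v E l))\<^sup>2) powr (1 + \<beta>)"
proof -
  have pos: "norm (transferM v E l) > 0"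
    using normsq_ge[of v E l] by (cases "norm (transferM v E l) = 0") auto
  have "((norm (transferM v E l))\<^sup>2) powr (1 + \<beta>) = (norm (transferM v E l) powr 2) powr (1 + \<beta>)"
    using pos by (simp add: powr_numeral)
  also have "\<dots> = norm (transferM v E l) powr (2 + 2 * \<beta>)"
    unfolding powr_powr by (simp add: algebra_simps)
  finally show ?thesis by simp
qed

theorem corollary11:
  fixes n :: nat and v :: "nat \<Rightarrow> real" and \<Delta> :: "real set" and \<beta> :: real
  assumes "is_interval \<Delta>" and "bounded \<Delta>" and "\<beta> > 0"
  shows "(max 0 (real (eig_count n v \<Delta>) - 1)) powr (1 + \<beta>)
    \<le> (real n * measure lborel \<Delta>) powr \<beta> *
       integral \<Delta> (\<lambda>E. \<Sum>l=1..n. norm (transferM v E l) powr (2 + 2 * \<beta>))"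
proof -
  note iv = assms(1) and bd = assms(2) and bp = assms(3)
  define p where "p = 1 + \<beta>"
  have p1: "p \<ge> 1" using bp unfolding p_def by simp
  define S where "S = {E \<in> \<Delta>. is_eigenvalue_H n v E}"
  have N: "eig_count n v \<Delta> = card S" by (simp add: eig_count_def S_def)
  define F where "F E = (\<Sum>l=1..n. norm (transferM v E l) powr (2 + 2 * \<beta>))" for E
  define g where "g E = (\<Sum>l=1..n. (norm (transferM v E l))\<^sup>2)" for E
  have F_eq: "F E = (\<Sum>l=1..n. ((norm (transferM v E l))\<^sup>2) powr p)" for E
    unfolding F_def p_def by (simp add: normpowr_eq)
  have gc: "continuous_on UNIV g" unfolding g_def
    by (intro continuous_on_sum normsq_cont)
  have Fc: "continuous_on UNIV F"
  proof -
    have "continuous_on UNIV (\<lambda>E. (\<Sum>l=1..n. ((norm (transferM v E l))\<^sup>2) powr p))"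
    proof (intro continuous_on_sum continuous_on_powr' normsq_cont continuous_on_const)
      fix l
      show "\<forall>E\<in>UNIV. 0 \<le> (norm (transferM v E l))\<^sup>2 \<and> ((norm (transferM v E l))\<^sup>2 = 0 \<longrightarrow> 0 < p)"
        using p1 by simp
    qed
    then show ?thesis by (simp add: F_eq[abs_def])
  qed
  have g0: "0 \<le> g E" for E unfolding g_def by (intro sum_nonneg) simp
  have F0: "0 \<le> F E" for E unfolding F_def by (intro sum_nonneg) simp
  have Fint: "F integrable_on \<Delta>" by (rule integrable_bdd_interval[OF Fc iv bd])
  have gint: "g integrable_on \<Delta>" by (rule integrable_bdd_interval[OF gc iv bd])
  have RHS0: "0 \<le> (real n * measure lborel \<Delta>) powr \<beta> * integral \<Delta> F"
    using Fint F0 by (intro mult_nonneg_nonneg integral_nonneg) auto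
  show ?thesis
  proof (cases "card S \<le> 1")
    case True
    then have "max 0 (real (eig_count n v \<Delta>) - 1) = 0" unfolding N by simp
    then show ?thesis using RHS0 unfolding F_def by simp
  next
    case False
    then have c2: "card S \<ge> 2" by simp
    then have fin: "finite S" and Sne: "S \<noteq> {}" by (auto intro: card_ge_0_finite)
    have n1: "n \<ge> 1"
    proof (rule ccontr)
      assume "\<not> n \<ge> 1"
      then have "n = 0" by simp
      then have "S = {}" unfolding S_def is_eigenvalue_H_def by auto
      then show False using Sne by simp
    qed
    define Z where "Z = {E. sol v 0 1 E (Suc n) = 0}"
    have SZ: "S \<subseteq> Z" unfolding S_def Z_def using eigen_zero by blast
    have gapZ: "1 \<le> integral {x..y} g" if "x < y" "x \<in> Z" "y \<in> Z" for x y
    proof (rule gap[where a = "\<lambda>E. sol v 0 1 E (Suc n)" and b = "\<lambda>E. sol v 1 0 E (Suc n)"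
          and a' = "\<lambda>E. dsol v 0 1 E (Suc n)" and b' = "\<lambda>E. dsol v 1 0 E (Suc n)"])
      fix t
      show "((\<lambda>E. sol v 0 1 E (Suc n)) has_real_derivative dsol v 0 1 t (Suc n)) (at t)"
        by (rule sol_deriv)
      show "((\<lambda>E. sol v 1 0 E (Suc n)) has_real_derivative dsol v 1 0 t (Suc n)) (at t)"
        by (rule sol_deriv)
      show Wp: "0 < sol v 0 1 t (Suc n) * dsol v 1 0 t (Suc n) - dsol v 0 1 t (Suc n) * sol v 1 0 t (Suc n)"
        unfolding W_identity using W_ge1[OF n1, of v t] by simp
      have ab: "0 < (sol v 0 1 t (Suc n))\<^sup>2 + (sol v 1 0 t (Suc n))\<^sup>2"
      proof -
        have "\<not> (sol v 0 1 t (Suc n) = 0 \<and> sol v 1 0 t (Suc n) = 0)" using Wp by auto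
        then show ?thesis by (simp add: sum_power2_gt_zero_iff)
      qed
      show "(sol v 0 1 t (Suc n) * dsol v 1 0 t (Suc n) - dsol v 0 1 t (Suc n) * sol v 1 0 t (Suc n)) /
          ((sol v 0 1 t (Suc n))\<^sup>2 + (sol v 1 0 t (Suc n))\<^sup>2) \<le> g t"
        unfolding W_identity g_def using W_le[of v t n] ab
        by (simp add: divide_le_eq mult.commute)
    qed (use that gc g0 in \<open>auto simp: Z_def\<close>)
    have cz: "real (card S) - 1 \<le> integral {Min S..Max S} g"
      by (rule count_zeros[OF gc g0 gapZ fin SZ Sne]) auto
    have MinS: "Min S \<in> \<Delta>" and MaxS: "Max S \<in> \<Delta>"
      using Min_in[OF fin Sne] Max_in[OF fin Sne] unfolding S_def by auto
    have sub: "{Min S..Max S} \<subseteq> \<Delta>"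
      using mem_is_interval_1_I[OF iv MinS MaxS] by auto
    have lt: "Min S < Max S"
    proof (rule ccontr)
      assume "\<not> Min S < Max S"
      then have "Min S = Max S" using Min_le[OF fin Max_in[OF fin Sne]] by simp
      then have "S \<subseteq> {Min S}" using fin by (metis Max_ge Min_le antisym singletonI subsetI)
      then have "card S \<le> 1" using card_mono[of "{Min S}" S] by simp
      then show False using c2 by simp
    qed
    define I1 where "I1 = integral \<Delta> g"
    have gI: "(g has_integral I1) \<Delta>" using gint unfolding I1_def by (simp add: integrable_integral)
    have "integral {Min S..Max S} g \<le> I1"
      unfolding I1_def using sub gint gc g0
      by (intro integral_subset_le) (auto intro!: integrable_continuous_interval continuous_on_subset[OF gc])
    then have I1ge: "real (card S) - 1 \<le> I1" using cz by simp
    then have I1pos: "I1 \<ge> 1" using c2 by simp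
    define m where "m = measure lborel \<Delta>"
    have mI: "((\<lambda>x. 1::real) has_integral m) \<Delta>"
      unfolding m_def
      by (rule has_integral_measure_lborel[OF real_interval_borel_measurable[OF iv] emeasure_bounded_finite[OF bd]])
    have "Max S - Min S \<le> m"
    proof -
      have "integral {Min S..Max S} (\<lambda>x. 1::real) \<le> integral \<Delta> (\<lambda>x. 1::real)"
        using sub mI by (intro integral_subset_le) (auto simp: has_integral_integrable)
      then show ?thesis using lt mI by (simp add: integral_unique)
    qed
    then have mpos: "m > 0" using lt by simp
    define K where "K = real n * m"
    have Kpos: "K > 0" unfolding K_def using n1 mpos by simp
    define c where "c = I1 / K"
    have cpos: "c > 0" unfolding c_def using I1pos Kpos by simp
    have pt: "real n * c powr p + p * c powr (p - 1) * (g E - real n * c) \<le> F E" for E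
    proof -
      have "(\<Sum>l=1..n. c powr p + p * c powr (p - 1) * ((norm (transferM v E l))\<^sup>2 - c))
           \<le> (\<Sum>l=1..n. ((norm (transferM v E l))\<^sup>2) powr p)"
      proof (rule sum_mono)
        fix l
        have "0 < (norm (transferM v E l))\<^sup>2" using normsq_ge[of v E l] by linarith
        then show "c powr p + p * c powr (p - 1) * ((norm (transferM v E l))\<^sup>2 - c)
            \<le> ((norm (transferM v E l))\<^sup>2) powr p"
          by (rule tangent_powr[OF _ cpos p1])
      qed
      moreover have "(\<Sum>l=1..n. c powr p + p * c powr (p - 1) * ((norm (transferM v E l))\<^sup>2 - c))
          = real n * c powr p + p * c powr (p - 1) * (g E - real n * c)"
        unfolding g_def by (simp add: sum.distrib sum_distrib_left sum_subtractf right_diff_distrib)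
      ultimately show ?thesis unfolding F_eq by simp
    qed
    have lin: "((\<lambda>E. real n * c powr p * 1 + p * c powr (p - 1) * (g E - real n * c * 1)) has_integral
        real n * c powr p * m + p * c powr (p - 1) * (I1 - real n * c * m)) \<Delta>"
      by (intro has_integral_add has_integral_mult_right has_integral_diff gI mI)
    have eqI: "real n * c * m = I1"
    proof -
      have "real n * c * m = K * c" unfolding K_def by simp
      also have "\<dots> = I1" unfolding c_def using Kpos by simp
      finally show ?thesis .
    qed
    have "K * c powr p \<le> integral \<Delta> F"
    proof -
      have "real n * c powr p * m + p * c powr (p - 1) * (I1 - real n * c * m) \<le> integral \<Delta> F"
        using lin Fint pt by (intro has_integral_le[OF lin]) (auto simp: integrable_integral)
      then have "real n * c powr p * m \<le> integral \<Delta> F" by (simp add: eqI)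
      then show ?thesis unfolding K_def by (simp add: mult_ac)
    qed
    then have "K powr \<beta> * (K * c powr p) \<le> K powr \<beta> * integral \<Delta> F"
      by (intro mult_left_mono) auto
    moreover have "K powr \<beta> * (K * c powr p) = I1 powr p"
    proof -
      have "K powr \<beta> * K = K powr p" unfolding p_def using Kpos by (simp add: powr_add)
      moreover have "c powr p = I1 powr p / K powr p" unfolding c_def
        using Kpos I1pos by (simp add: powr_divide)
      ultimately show ?thesis using Kpos by (simp add: mult.assoc[symmetric])
    qed
    moreover have "(real (card S) - 1) powr p \<le> I1 powr p"
      using I1ge c2 p1 by (intro powr_mono2) auto
    moreover have "max 0 (real (eig_count n v \<Delta>) - 1) = real (card S) - 1" using N c2 by simp
    ultimately show ?thesis unfolding p_def F_def K_def m_def by simp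
  qed
qed

end
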